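(* For any $\varepsilon>0$ and any $v,w\in\mathbb{R}^L$, if $\|v-w\|<\varepsilon$ then $\mathrm{argmax}^\varepsilon(v)\cap\mathrm{argmax}^\varepsilon(w)\neq\varnothing$. In particular, $\mathrm{argmax}^\varepsilon$ restricted to $\Delta_{L-1}$ is an $\varepsilon$-compatible selection rule.
   Context: $\|\cdot\|$ is the Euclidean norm on $\mathbb{R}^L$, $\Delta_{L-1}=\{w\in\mathbb{R}^L:w_i\ge0,\sum_iw_i=1\}$. For $\varepsilon>0$ and $j\in[L]$, $R_j^\varepsilon=\{w\in\mathbb{R}^L: w_j\ge\max_{\ell\neq j}w_\ell+\varepsilon/\sqrt2\}$, and the inflated argmax is $\mathrm{argmax}^\varepsilon(w)=\{j\in[L]:\mathrm{dist}(w,R_j^\varepsilon)<\varepsilon\}$ where $\mathrm{dist}(w,R)=\inf_{u\in R}\|w-u\|$. A selection rule $s:\Delta_{L-1}\to2^{[L]}$ is $\varepsilon$-compatible if $\|v-w\|<\varepsilon$ implies $s(v)\cap s(w)\ne\varnothing$ for all $v,w\in\Delta_{L-1}$. *)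

theory Defs
  imports "HOL-Analysis.Analysis"
begin

text \<open>Vectors in R^L are modelled as \<open>real ^ 'n\<close> with finite index type \<open>'n\<close> playing
  the role of [L]; \<open>dist\<close>/\<open>norm\<close> on this type is the Euclidean norm.\<close>

definition prob_simplex :: "(real ^ 'n) set" where
  "prob_simplex = {w. (\<forall>i. 0 \<le> w $ i) \<and> (\<Sum>i\<in>UNIV. w $ i) = 1}"

definition region :: "real \<Rightarrow> 'n \<Rightarrow> (real ^ 'n) set" where
  "region \<epsilon> j = {w. \<forall>l. l \<noteq> j \<longrightarrow> w $ j \<ge> w $ l + \<epsilon> / sqrt 2}"

definition argmax_eps :: "real \<Rightarrow> real ^ 'n \<Rightarrow> 'n set" where
  "argmax_eps \<epsilon> w = {j. infdist w (region \<epsilon> j) < \<epsilon>}"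

definition eps_compatible :: "real \<Rightarrow> ((real ^ 'n) \<Rightarrow> 'n set) \<Rightarrow> bool" where
  "eps_compatible \<epsilon> s \<longleftrightarrow>
     (\<forall>v\<in>prob_simplex. \<forall>w\<in>prob_simplex. norm (v - w) < \<epsilon> \<longrightarrow> s v \<inter> s w \<noteq> {})"

end

theory Submission imports Defs begin

lemma normsq_vec: "(norm (x::real^'n))\<^sup>2 = (\<Sum>l\<in>UNIV. (x$l)\<^sup>2)"
  unfolding power2_norm_eq_inner inner_vec_def by (simp add: power2_eq_square)

lemma inner_vec_real: "inner (x::real^'n) y = (\<Sum>l\<in>UNIV. x$l * y$l)"
  by (simp add: inner_vec_def)

lemma level_exists:
  fixes x :: "real^'n" and \<epsilon> :: real
  assumes "\<epsilon> > 0"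
  shows "\<exists>\<tau>. (\<Sum>l\<in>UNIV. max 0 (x$l - \<tau>))\<^sup>2 + (\<Sum>l\<in>UNIV. (max 0 (x$l - \<tau>))\<^sup>2) = \<epsilon>\<^sup>2"
proof -
  define G where "G = (\<lambda>\<tau>. (\<Sum>l\<in>UNIV. max 0 (x$l - \<tau>))\<^sup>2 + (\<Sum>l\<in>UNIV. (max 0 (x$l - \<tau>))\<^sup>2))"
  obtain i0 :: 'n where True by simp
  define a where "a = x$i0 - \<epsilon>"
  define b where "b = (\<Sum>l\<in>UNIV. \<bar>x$l\<bar>)"
  have xb: "x$l \<le> b" for l
  proof -
    have "\<bar>x$l\<bar> \<le> b" unfolding b_def by (rule member_le_sum) auto
    then show ?thesis by linarith
  qed
  have ab: "a \<le> b" using xb[of i0] assms unfolding a_def by linarith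
  have Gb: "G b \<le> \<epsilon>\<^sup>2"
  proof -
    have "max 0 (x$l - b) = 0" for l using xb[of l] by simp
    then show ?thesis unfolding G_def by simp
  qed
  have Ga: "\<epsilon>\<^sup>2 \<le> G a"
  proof -
    have "\<epsilon> = max 0 (x$i0 - a)" unfolding a_def using assms by simp
    also have "\<dots> \<le> (\<Sum>l\<in>UNIV. max 0 (x$l - a))" by (rule member_le_sum) auto
    finally have "\<epsilon>\<^sup>2 \<le> (\<Sum>l\<in>UNIV. max 0 (x$l - a))\<^sup>2"
      using assms by (simp add: power_mono)
    moreover have "0 \<le> (\<Sum>l\<in>UNIV. (max 0 (x$l - a))\<^sup>2)" by (simp add: sum_nonneg)
    ultimately show ?thesis unfolding G_def by linarith
  qed
  have "continuous_on {a..b} G" unfolding G_def by (intro continuous_intros)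
  from IVT2'[of G b "\<epsilon>\<^sup>2" a, OF Gb Ga ab this] show ?thesis unfolding G_def by blast
qed

lemma sq_sum_le:
  fixes f :: "'a \<Rightarrow> real"
  assumes "finite S" "\<And>l. l \<in> S \<Longrightarrow> 0 \<le> f l"
  shows "(\<Sum>l\<in>S. (f l)\<^sup>2) \<le> (\<Sum>l\<in>S. f l)\<^sup>2"
proof -
  have "(f l)\<^sup>2 \<le> f l * (\<Sum>l\<in>S. f l)" if "l \<in> S" for l
  proof -
    have "f l \<le> (\<Sum>l\<in>S. f l)" by (rule member_le_sum) (use assms that in auto)
    then show ?thesis using assms(2)[OF that] by (simp add: power2_eq_square mult_left_mono)
  qed
  then have "(\<Sum>l\<in>S. (f l)\<^sup>2) \<le> (\<Sum>l\<in>S. f l * (\<Sum>l\<in>S. f l))" by (rule sum_mono)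
  also have "\<dots> = (\<Sum>l\<in>S. f l)\<^sup>2" by (simp add: sum_distrib_right power2_eq_square)
  finally show ?thesis .
qed

lemma member_crit:
  fixes x :: "real^'n" and \<epsilon> \<tau> :: real
  assumes eps: "\<epsilon> > 0"
    and lev: "(\<Sum>l\<in>UNIV. max 0 (x$l - \<tau>))\<^sup>2 + (\<Sum>l\<in>UNIV. (max 0 (x$l - \<tau>))\<^sup>2) = \<epsilon>\<^sup>2"
    and gt: "x$j > \<tau> + \<epsilon> / sqrt 2 - (\<Sum>l\<in>UNIV. max 0 (x$l - \<tau>))"
  shows "j \<in> argmax_eps \<epsilon> x"
proof -
  define c where "c = \<epsilon> / sqrt 2"
  define s where "s = (\<Sum>l\<in>UNIV. max 0 (x$l - \<tau>))"
  define Q where "Q = (\<Sum>l\<in>UNIV. (max 0 (x$l - \<tau>))\<^sup>2)"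
  have s0: "0 \<le> s" unfolding s_def by (simp add: sum_nonneg)
  have Qs: "Q \<le> s\<^sup>2" unfolding Q_def s_def by (rule sq_sum_le) auto
  have lev': "s\<^sup>2 + Q = \<epsilon>\<^sup>2" using lev unfolding s_def Q_def .
  have e2: "0 < \<epsilon>\<^sup>2" using eps by simp
  have "0 < s\<^sup>2" using Qs lev' e2 by linarith
  then have "s \<noteq> 0" by auto
  then have spos: "0 < s" using s0 by linarith
  define p :: "real^'n" where "p = (\<chi> l. if l = j then max (x$j) (\<tau> + c) else min (x$l) \<tau>)"
  have pR: "p \<in> region \<epsilon> j"
    unfolding region_def p_def c_def by auto
  have pt: "(x$l - p$l)\<^sup>2 \<le> (max 0 (x$l - \<tau>))\<^sup>2 + (if l = j then (max 0 (\<tau> + c - x$j))\<^sup>2 else 0)" for l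
  proof (cases "l = j")
    case True
    have "(x$l - p$l)\<^sup>2 = (max 0 (\<tau> + c - x$j))\<^sup>2"
      unfolding p_def using True by (auto simp: max_def power2_eq_square algebra_simps)
    then show ?thesis using True by simp
  next
    case False
    have "(x$l - p$l)\<^sup>2 = (max 0 (x$l - \<tau>))\<^sup>2"
      unfolding p_def using False by (auto simp: max_def min_def)
    then show ?thesis using False by simp
  qed
  have "(norm (x - p))\<^sup>2 = (\<Sum>l\<in>UNIV. (x$l - p$l)\<^sup>2)" by (simp add: normsq_vec)
  also have "\<dots> \<le> (\<Sum>l\<in>UNIV. (max 0 (x$l - \<tau>))\<^sup>2 + (if l = j then (max 0 (\<tau> + c - x$j))\<^sup>2 else 0))"
    by (rule sum_mono) (rule pt)
  also have "\<dots> = Q + (max 0 (\<tau> + c - x$j))\<^sup>2"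
    unfolding Q_def by (simp add: sum.distrib)
  also have "\<dots> < Q + s\<^sup>2"
  proof -
    have "max 0 (\<tau> + c - x$j) < s" using gt spos unfolding c_def s_def by simp
    then have "(max 0 (\<tau> + c - x$j))\<^sup>2 < s\<^sup>2" by (intro power_strict_mono) auto
    then show ?thesis by simp
  qed
  finally have "(norm (x - p))\<^sup>2 < \<epsilon>\<^sup>2" using lev' by simp
  then have "norm (x - p) < \<epsilon>" using eps by (meson less_le power_less_imp_less_base)
  moreover have "infdist x (region \<epsilon> j) \<le> dist x p" using pR by (rule infdist_le)
  ultimately show ?thesis unfolding argmax_eps_def by (simp add: dist_norm)
qed

lemma no_disjoint:
  fixes v w :: "real^'n" and \<epsilon> \<tau>v \<tau>w :: real
  assumes eps: "\<epsilon> > 0"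
    and levv: "(\<Sum>l\<in>UNIV. max 0 (v$l - \<tau>v))\<^sup>2 + (\<Sum>l\<in>UNIV. (max 0 (v$l - \<tau>v))\<^sup>2) = \<epsilon>\<^sup>2"
    and levw: "(\<Sum>l\<in>UNIV. max 0 (w$l - \<tau>w))\<^sup>2 + (\<Sum>l\<in>UNIV. (max 0 (w$l - \<tau>w))\<^sup>2) = \<epsilon>\<^sup>2"
    and hyp: "\<And>l. v$l \<le> \<tau>v + \<epsilon> / sqrt 2 - (\<Sum>l\<in>UNIV. max 0 (v$l - \<tau>v))
               \<or> w$l \<le> \<tau>w + \<epsilon> / sqrt 2 - (\<Sum>l\<in>UNIV. max 0 (w$l - \<tau>w))"
    and close: "norm (v - w) < \<epsilon>"
  shows False
proof -
  define c where "c = \<epsilon> / sqrt 2"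
  define a where "a = (\<lambda>l. max 0 (v$l - \<tau>v))"
  define b where "b = (\<lambda>l. max 0 (w$l - \<tau>w))"
  define s where "s = (\<Sum>l\<in>UNIV. a l)"
  define t where "t = (\<Sum>l\<in>UNIV. b l)"
  define A where "A = (\<Sum>l\<in>UNIV. (a l)\<^sup>2)"
  define B where "B = (\<Sum>l\<in>UNIV. (b l)\<^sup>2)"
  have c0: "0 < c" unfolding c_def using eps by simp
  have csq: "\<epsilon>\<^sup>2 = 2 * c\<^sup>2" unfolding c_def by (simp add: power_divide)
  have a0: "0 \<le> a l" for l unfolding a_def by simp
  have b0: "0 \<le> b l" for l unfolding b_def by simp
  have s0: "0 \<le> s" unfolding s_def using a0 by (simp add: sum_nonneg)
  have t0: "0 \<le> t" unfolding t_def using b0 by (simp add: sum_nonneg)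
  have As: "A \<le> s\<^sup>2" unfolding A_def s_def by (rule sq_sum_le) (auto simp: a0)
  have Bs: "B \<le> t\<^sup>2" unfolding B_def t_def by (rule sq_sum_le) (auto simp: b0)
  have levA: "A = 2*c\<^sup>2 - s\<^sup>2" using levv csq unfolding A_def s_def a_def by linarith
  have levB: "B = 2*c\<^sup>2 - t\<^sup>2" using levw csq unfolding B_def t_def b_def by linarith
  have sc: "c \<le> s" by (rule power2_le_imp_le) (use As levA s0 in auto)
  have tc: "c \<le> t" by (rule power2_le_imp_le) (use Bs levB t0 in auto)
  have A0: "0 \<le> A" unfolding A_def by (simp add: sum_nonneg)
  have B0: "0 \<le> B" unfolding B_def by (simp add: sum_nonneg)
  have cc: "0 < c\<^sup>2" using c0 by simp
  have s2c: "s < 2*c"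
  proof (rule power2_less_imp_less)
    have "(2*c)\<^sup>2 = 4*c\<^sup>2" by (simp add: power_mult_distrib)
    then show "s\<^sup>2 < (2*c)\<^sup>2" using A0 levA cc by linarith
  qed (use c0 in simp)
  have t2c: "t < 2*c"
  proof (rule power2_less_imp_less)
    have "(2*c)\<^sup>2 = 4*c\<^sup>2" by (simp add: power_mult_distrib)
    then show "t\<^sup>2 < (2*c)\<^sup>2" using B0 levB cc by linarith
  qed (use c0 in simp)
  have hyp': "v$l \<le> \<tau>v + c - s \<or> w$l \<le> \<tau>w + c - t" for l
    using hyp[of l] unfolding c_def s_def t_def a_def b_def by simp
  define K1 where "K1 = \<tau>v - \<tau>w - c + t"
  define K2 where "K2 = \<tau>w - \<tau>v - c + s"
  have pt: "(v$l - w$l) * (t * a l - s * b l) \<ge> t * a l * (a l + K1) + s * b l * (b l + K2)" for l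
  proof (cases "a l > 0")
    case True
    then have va: "a l = v$l - \<tau>v" unfolding a_def by auto
    then have "\<not> v$l \<le> \<tau>v + c - s" using True sc by linarith
    then have wl: "w$l \<le> \<tau>w + c - t" using hyp' by blast
    then have "b l = 0" unfolding b_def using tc by auto
    moreover have "0 \<le> t * a l * ((v$l - w$l) - (a l + K1))"
      using t0 a0 wl va True unfolding K1_def by (intro mult_nonneg_nonneg) auto
    ultimately show ?thesis by (simp add: algebra_simps)
  next
    case False
    then have a00: "a l = 0" using a0[of l] by linarith
    show ?thesis
    proof (cases "b l > 0")
      case True
      then have wb: "b l = w$l - \<tau>w" unfolding b_def by auto
      then have "\<not> w$l \<le> \<tau>w + c - t" using True tc by linarith
      then have vl: "v$l \<le> \<tau>v + c - s" using hyp' by blast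
      have "0 \<le> s * b l * ((w$l - v$l) - (b l + K2))"
        using s0 b0 vl wb True unfolding K2_def by (intro mult_nonneg_nonneg) auto
      then show ?thesis using a00 by (simp add: algebra_simps)
    next
      case False
      then have "b l = 0" using b0[of l] by linarith
      then show ?thesis using a00 by simp
    qed
  qed
  define z :: "real^'n" where "z = (\<chi> l. t * a l - s * b l)"
  define N where "N = t * A + s * B + s * t * (s + t - 2*c)"
  have "(\<Sum>l\<in>UNIV. t * a l * (a l + K1) + s * b l * (b l + K2))
      = (\<Sum>l\<in>UNIV. t * (a l)\<^sup>2 + (t * K1) * a l + s * (b l)\<^sup>2 + (s * K2) * b l)"
    by (rule sum.cong) (simp_all add: algebra_simps power2_eq_square)
  also have "\<dots> = t * A + t * K1 * s + s * B + s * K2 * t"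
    by (simp add: sum.distrib sum_distrib_left[symmetric] A_def B_def s_def[symmetric] t_def[symmetric])
  also have "\<dots> = N" unfolding N_def K1_def K2_def by (simp add: algebra_simps)
  finally have sumN: "(\<Sum>l\<in>UNIV. t * a l * (a l + K1) + s * b l * (b l + K2)) = N" .
  have "N \<le> inner (v - w) z"
    unfolding inner_vec_real z_def using sumN pt by (metis (no_types, lifting) sum_mono vector_minus_component vec_lambda_beta)
  also have "\<dots> \<le> norm (v - w) * norm z" by (rule norm_cauchy_schwarz)
  finally have NP: "N \<le> norm (v - w) * norm z" .
  have "(norm z)\<^sup>2 = (\<Sum>l\<in>UNIV. (t * a l - s * b l)\<^sup>2)" unfolding z_def by (simp add: normsq_vec)
  also have "\<dots> \<le> (\<Sum>l\<in>UNIV. t\<^sup>2 * (a l)\<^sup>2 + s\<^sup>2 * (b l)\<^sup>2)"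
  proof (rule sum_mono)
    fix l
    have "0 \<le> 2 * (s * t) * (a l * b l)" using s0 t0 a0 b0 by simp
    then show "(t * a l - s * b l)\<^sup>2 \<le> t\<^sup>2 * (a l)\<^sup>2 + s\<^sup>2 * (b l)\<^sup>2"
      by (simp add: power2_eq_square algebra_simps)
  qed
  also have "\<dots> = t\<^sup>2 * A + s\<^sup>2 * B" unfolding A_def B_def by (simp add: sum.distrib sum_distrib_left)
  finally have nz: "(norm z)\<^sup>2 \<le> t\<^sup>2 * A + s\<^sup>2 * B" .
  have Neq: "N = 2*c*(c*(s+t) - s*t)" unfolding N_def levA levB by algebra
  have "(s - c) * (t - c) \<le> (s - c) * c" using sc t2c by (intro mult_left_mono) auto
  also have "\<dots> < c * c" using s2c c0 by (intro mult_strict_right_mono) auto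
  finally have "0 < c*(s+t) - s*t" by (simp add: algebra_simps)
  then have Npos: "0 < N" unfolding Neq using c0 by simp
  have key: "N\<^sup>2 - 2*c\<^sup>2 * (t\<^sup>2 * A + s\<^sup>2 * B) = 8 * (c\<^sup>2) * s * t * (s - c) * (t - c)"
    unfolding Neq levA levB by algebra
  have "0 \<le> 8 * (c\<^sup>2) * s * t * (s - c) * (t - c)" using s0 t0 sc tc by simp
  then have Nbig: "2*c\<^sup>2 * (t\<^sup>2 * A + s\<^sup>2 * B) \<le> N\<^sup>2" using key by linarith
  have "N\<^sup>2 \<le> (norm (v - w) * norm z)\<^sup>2" using NP Npos by (intro power_mono) auto
  also have "\<dots> = (norm (v - w))\<^sup>2 * (norm z)\<^sup>2" by (simp add: power_mult_distrib)
  finally have N2: "N\<^sup>2 \<le> (norm (v - w))\<^sup>2 * (norm z)\<^sup>2" .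
  have zpos: "0 < norm z" using NP Npos by (smt (verit) mult_nonneg_nonpos norm_ge_zero)
  have "(norm (v - w))\<^sup>2 < \<epsilon>\<^sup>2" using close by (intro power_strict_mono) auto
  then have "(norm (v - w))\<^sup>2 * (norm z)\<^sup>2 < \<epsilon>\<^sup>2 * (norm z)\<^sup>2" using zpos by (intro mult_strict_right_mono) auto
  also have "\<dots> \<le> \<epsilon>\<^sup>2 * (t\<^sup>2 * A + s\<^sup>2 * B)" using nz by (intro mult_left_mono) auto
  finally have X: "(norm (v - w))\<^sup>2 * (norm z)\<^sup>2 < \<epsilon>\<^sup>2 * (t\<^sup>2 * A + s\<^sup>2 * B)" .
  have Y: "\<epsilon>\<^sup>2 * (t\<^sup>2 * A + s\<^sup>2 * B) = 2*c\<^sup>2 * (t\<^sup>2 * A + s\<^sup>2 * B)" using csq by simp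
  show False using X Y N2 Nbig by linarith
qed

theorem theorem3:
  fixes \<epsilon> :: real
  assumes "\<epsilon> > 0"
  shows "(\<forall>v w :: real ^ 'n. norm (v - w) < \<epsilon> \<longrightarrow>
            argmax_eps \<epsilon> v \<inter> argmax_eps \<epsilon> w \<noteq> {})
         \<and> eps_compatible \<epsilon> (argmax_eps \<epsilon> :: real ^ 'n \<Rightarrow> 'n set)"
proof -
  have main: "argmax_eps \<epsilon> v \<inter> argmax_eps \<epsilon> w \<noteq> {}" if close: "norm (v - w) < \<epsilon>" for v w :: "real^'n"
  proof
    assume empty: "argmax_eps \<epsilon> v \<inter> argmax_eps \<epsilon> w = {}"
    obtain \<tau>v where levv: "(\<Sum>l\<in>UNIV. max 0 (v$l - \<tau>v))\<^sup>2 + (\<Sum>l\<in>UNIV. (max 0 (v$l - \<tau>v))\<^sup>2) = \<epsilon>\<^sup>2"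
      using level_exists[OF assms] by blast
    obtain \<tau>w where levw: "(\<Sum>l\<in>UNIV. max 0 (w$l - \<tau>w))\<^sup>2 + (\<Sum>l\<in>UNIV. (max 0 (w$l - \<tau>w))\<^sup>2) = \<epsilon>\<^sup>2"
      using level_exists[OF assms] by blast
    have hyp: "v$l \<le> \<tau>v + \<epsilon> / sqrt 2 - (\<Sum>l\<in>UNIV. max 0 (v$l - \<tau>v))
               \<or> w$l \<le> \<tau>w + \<epsilon> / sqrt 2 - (\<Sum>l\<in>UNIV. max 0 (w$l - \<tau>w))" for l
    proof (rule ccontr)
      assume "\<not> ?thesis"
      then have "l \<in> argmax_eps \<epsilon> v" "l \<in> argmax_eps \<epsilon> w"
        using member_crit[OF assms levv, of l] member_crit[OF assms levw, of l] by auto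
      then show False using empty by blast
    qed
    show False by (rule no_disjoint[OF assms levv levw hyp close])
  qed
  show ?thesis unfolding eps_compatible_def using main by blast
qed

end
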